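(* Let $d\ge 1$, $\kappa>0$, and let $\bm{x}_1,\dots,\bm{x}_{l+m}\in\mathcal{H}_d$, where the first $l$ points are designated as landmarks and the remaining $m$ as non-landmarks. Assume the landmarks $\bm{x}_1,\dots,\bm{x}_l$ are not all contained in a single hyperplane of $\mathcal{H}_d$ (i.e., they are not all contained in a $d$-dimensional linear subspace of $\mathbb{R}^{d+1}$; in particular $l\ge d+1$). Let $D=[d_{ij}]$ with $d_{ij}=\mathrm{d}^\kappa_H(\bm{x}_i,\bm{x}_j)$, partitioned as $D=\begin{psmallmatrix} D_L & D_N^\top\\ D_N & D_R\end{psmallmatrix}$ with $D_L\in\mathbb{R}^{l\times l}$ (landmark–landmark distances) and $D_N\in\mathbb{R}^{m\times l}$ (non-landmark–landmark distances). Then the algorithm L-hydra$(D_L,D_N,d,\kappa)$ does not return Null, and the rows $\hat{\bm{x}}_1,\dots,\hat{\bm{x}}_{l+m}$ of the returned matrix $\hat X=\begin{psmallmatrix}\hat X_L\\ \hat X_N\end{psmallmatrix}$ are points of $\mathcal{H}_d$ satisfying $$\mathrm{d}^\kappa_H(\hat{\bm{x}}_i,\hat{\bm{x}}_j)=\mathrm{d}^\kappa_H(\bm{x}_i,\bm{x}_j)\quad\text{for all } i,j=1,\dots,l+m.$$ In fact there is a positive Lorentz matrix $T$ with $\hat X = XT$, where $X$ is the matrix with rows $\bm{x}_1^\top,\dots,\bm{x}_{l+m}^\top$.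
   Context: Lorentz product on $\mathbb{R}^{d+1}$: $\bm{x}\circ\bm{y} = x_1y_1 - (x_2y_2+\dots+x_{d+1}y_{d+1})$. $J=\operatorname{diag}(1,-1,\dots,-1)\in\mathbb{R}^{(d+1)\times(d+1)}$. Hyperboloid: $\mathcal{H}_d=\{\bm{x}\in\mathbb{R}^{d+1}: \bm{x}\circ\bm{x}=1,\ x_1>0\}$. For $\kappa>0$: $\mathrm{d}^\kappa_H(\bm{x},\bm{y})=\frac{1}{\sqrt{\kappa}}\operatorname{arcosh}(\bm{x}\circ\bm{y})$. A positive Lorentz matrix is an invertible $T$ with $T_{11}>0$ and $T^\top JT=TJT^\top=J$. Algorithm L-hydra$(D_L,D_N,d,\kappa)$: input a symmetric $D_L\in\mathbb{R}_{\ge0}^{l\times l}$ with zero diagonal, $D_N\in\mathbb{R}_{\ge 0}^{m\times l}$, an integer $d\ge1$ and $\kappa>0$. Step 1: set $A_L=\cosh(\sqrt{\kappa}D_L)$, $A_N=\cosh(\sqrt{\kappa}D_N)$ (cosh applied entrywise) and take an eigendecomposition $A_L=Q\Lambda Q^\top$ with $Q$ orthogonal, columns $\bm{q}_1,\dots,\bm{q}_l$, and $\Lambda=\operatorname{diag}(\lambda_1,\dots,\lambda_l)$, $\lambda_1\ge\dots\ge\lambda_l$; the sign of $\bm{q}_1$ is chosen so that its entries are positive (Perron vector). Step 2: if $\lambda_{l-d+1},\dots,\lambda_l$ are not all strictly negative (or $l<d+1$), return Null; otherwise set $\hat X_L=\big[\sqrt{\lambda_1}\bm{q}_1,\ \sqrt{-\lambda_{l-d+1}}\bm{q}_{l-d+1},\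 \dots,\ \sqrt{-\lambda_l}\bm{q}_l\big]\in\mathbb{R}^{l\times(d+1)}$. Step 3: set $\hat X_N=A_N\big[\bm{q}_1/\sqrt{\lambda_1},\ -\bm{q}_{l-d+1}/\sqrt{-\lambda_{l-d+1}},\ \dots,\ -\bm{q}_l/\sqrt{-\lambda_l}\big]\in\mathbb{R}^{m\times(d+1)}$. Return $\hat X=\begin{psmallmatrix}\hat X_L\\ \hat X_N\end{psmallmatrix}$. *)

theory Defs
  imports Complex_Main "Jordan_Normal_Form.Matrix"
begin

text \<open>Vectors/matrices are 0-indexed: coordinate 1 of the paper is index 0,
  point x_i of the paper is row (i-1) of X, eigenpair k of the paper is index k-1.\<close>

definition lorentz :: "real vec \<Rightarrow> real vec \<Rightarrow> real" where
  "lorentz x y = x $ 0 * y $ 0 - (\<Sum>k\<in>{1..<dim_vec x}. x $ k * y $ k)"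

definition hyperboloid :: "nat \<Rightarrow> real vec set" where
  "hyperboloid d = {x. dim_vec x = d + 1 \<and> lorentz x x = 1 \<and> x $ 0 > 0}"

definition distH :: "real \<Rightarrow> real vec \<Rightarrow> real vec \<Rightarrow> real" where
  "distH \<kappa> x y = arcosh (lorentz x y) / sqrt \<kappa>"

definition lorentzJ :: "nat \<Rightarrow> real mat" where
  "lorentzJ d = mat (d + 1) (d + 1) (\<lambda>(i, j). if i = j then (if i = 0 then 1 else -1) else 0)"

definition positive_lorentz :: "nat \<Rightarrow> real mat \<Rightarrow> bool" where
  "positive_lorentz d T \<longleftrightarrow> T \<in> carrier_mat (d + 1) (d + 1) \<and> invertible_mat T \<and> T $$ (0, 0) > 0 \<and>
     transpose_mat T * lorentzJ d * T = lorentzJ d \<and> T * lorentzJ d * transpose_mat T = lorentzJ d"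

definition rows_in_hyperplane :: "nat \<Rightarrow> nat \<Rightarrow> real mat \<Rightarrow> bool" where
  "rows_in_hyperplane d l X \<longleftrightarrow>
     (\<exists>w. dim_vec w = d + 1 \<and> w \<noteq> 0\<^sub>v (d + 1) \<and> (\<forall>i<l. w \<bullet> row X i = 0))"

text \<open>Step 1 of L-hydra: entrywise cosh and a valid eigendecomposition
  A_L = Q diag(lam 0, ..., lam (l-1)) Q^T with Q orthogonal, eigenvalues in
  nonincreasing order, and first column (Perron vector) with positive entries.\<close>
definition coshmat :: "real \<Rightarrow> real mat \<Rightarrow> real mat" where
  "coshmat \<kappa> D = mat (dim_row D) (dim_col D) (\<lambda>(i, j). cosh (sqrt \<kappa> * D $$ (i, j)))"

definition lhydra_eigdecomp :: "real \<Rightarrow> real mat \<Rightarrow> real mat \<Rightarrow> (nat \<Rightarrow> real) \<Rightarrow> bool" where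
  "lhydra_eigdecomp \<kappa> DL Q lam \<longleftrightarrow>
     (let l = dim_row DL in
      Q \<in> carrier_mat l l \<and> transpose_mat Q * Q = 1\<^sub>m l \<and> Q * transpose_mat Q = 1\<^sub>m l \<and>
      coshmat \<kappa> DL = Q * mat l l (\<lambda>(i, j). if i = j then lam i else 0) * transpose_mat Q \<and>
      (\<forall>i j. i \<le> j \<and> j < l \<longrightarrow> lam j \<le> lam i) \<and>
      (\<forall>i<l. Q $$ (i, 0) > 0))"

definition lh_idx :: "nat \<Rightarrow> nat \<Rightarrow> nat \<Rightarrow> nat" where
  "lh_idx l d c = (if c = 0 then 0 else l - d - 1 + c)"

definition lh_scale :: "nat \<Rightarrow> nat \<Rightarrow> (nat \<Rightarrow> real) \<Rightarrow> nat \<Rightarrow> real" where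
  "lh_scale l d lam c = (if c = 0 then sqrt (lam 0) else sqrt (- lam (lh_idx l d c)))"

text \<open>Steps 2 and 3 of L-hydra, given the output (Q, lam) of step 1.
  None plays the role of Null.\<close>
definition lhydra :: "real mat \<Rightarrow> real mat \<Rightarrow> nat \<Rightarrow> real \<Rightarrow> real mat \<Rightarrow> (nat \<Rightarrow> real) \<Rightarrow> real mat option" where
  "lhydra DL DN d \<kappa> Q lam =
     (let l = dim_row DL;
          AN = coshmat \<kappa> DN;
          XL = mat l (d + 1) (\<lambda>(i, c). lh_scale l d lam c * Q $$ (i, lh_idx l d c));
          M = mat l (d + 1) (\<lambda>(i, c). (if c = 0 then 1 else -1) * Q $$ (i, lh_idx l d c) / lh_scale l d lam c);
          XN = AN * M
      in if l < d + 1 \<or> \<not> (\<forall>k. l - d \<le> k \<and> k < l \<longrightarrow> lam k < 0) then None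
         else Some (XL @\<^sub>r XN))"

end

theory Submission imports Defs "Jordan_Normal_Form.Determinant" begin

definition sg :: "nat \<Rightarrow> real" where "sg a = (if a = 0 then 1 else -1)"

lemma sg_sq[simp]: "sg a * sg a = 1" by (simp add: sg_def)
lemma sg_nz[simp]: "sg a \<noteq> 0" by (simp add: sg_def)

lemma lorentz_sum:
  assumes "dim_vec u = Suc d" "dim_vec v = Suc d"
  shows "lorentz u v = (\<Sum>a<Suc d. sg a * u $ a * v $ a)"
proof -
  have "(\<Sum>a<Suc d. sg a * u $ a * v $ a) = u $ 0 * v $ 0 + (\<Sum>a<d. sg (Suc a) * u $ Suc a * v $ Suc a)"
    by (subst sum.lessThan_Suc_shift) (simp add: sg_def)
  also have "(\<Sum>a<d. sg (Suc a) * u $ Suc a * v $ Suc a) = - (\<Sum>k\<in>{1..<Suc d}. u $ k * v $ k)"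
  proof -
    have "(\<Sum>k\<in>{1..<Suc d}. u $ k * v $ k) = (\<Sum>a<d. u $ Suc a * v $ Suc a)"
      using sum.shift_bounds_Suc_ivl[of "\<lambda>k. u$k*v$k" 0 d] by (simp add: atLeast0LessThan)
    then show ?thesis by (simp add: sg_def sum_negf)
  qed
  finally show ?thesis unfolding lorentz_def assms by simp
qed

lemma cs_sum:
  fixes a b :: "nat \<Rightarrow> real"
  shows "(\<Sum>i\<in>I. a i * b i)\<^sup>2 \<le> (\<Sum>i\<in>I. (a i)\<^sup>2) * (\<Sum>i\<in>I. (b i)\<^sup>2)"
proof (cases "(\<Sum>i\<in>I. (b i)\<^sup>2) > 0")
  case False
  then consider "\<And>i. i\<in>I \<Longrightarrow> b i = 0" | "infinite I"
    by (metis (mono_tags, lifting) sum_pos2 zero_le_power2 zero_less_power2)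
  thus ?thesis
    by fastforce
next
  case True
  define r where "r \<equiv> (\<Sum>i\<in>I. a i * b i) / (\<Sum>i\<in>I. (b i)\<^sup>2)"
  have "0 \<le> (\<Sum>i\<in>I. (a i - r * b i)\<^sup>2)"
    by (simp add: sum_nonneg)
  also have "... = (\<Sum>i\<in>I. (a i)\<^sup>2) - 2 * r * (\<Sum>i\<in>I. a i * b i) + r\<^sup>2 * (\<Sum>i\<in>I. (b i)\<^sup>2)"
    by (simp add: algebra_simps power2_eq_square sum_distrib_left flip: sum.distrib)
  also have "\<dots> = (\<Sum>i\<in>I. (a i)\<^sup>2) - ((\<Sum>i\<in>I. a i * b i))\<^sup>2 / (\<Sum>i\<in>I. (b i)\<^sup>2)"
    by (simp add: r_def power2_eq_square)
  finally have "0 \<le> (\<Sum>i\<in>I. (a i)\<^sup>2) - ((\<Sum>i\<in>I. a i * b i))\<^sup>2 / (\<Sum>i\<in>I. (b i)\<^sup>2)" .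
  hence "((\<Sum>i\<in>I. a i * b i))\<^sup>2 / (\<Sum>i\<in>I. (b i)\<^sup>2) \<le> (\<Sum>i\<in>I. (a i)\<^sup>2)"
    by (simp add: le_diff_eq)
  thus "((\<Sum>i\<in>I. a i * b i))\<^sup>2 \<le> (\<Sum>i\<in>I. (a i)\<^sup>2) * (\<Sum>i\<in>I. (b i)\<^sup>2)"
    by (simp add: pos_divide_le_eq True)
qed

lemma lorentz_ge1:
  assumes "u \<in> hyperboloid d" "v \<in> hyperboloid d"
  shows "lorentz u v \<ge> 1"
proof -
  define A where "A = (\<Sum>k\<in>{1..<Suc d}. (u $ k)\<^sup>2)"
  define B where "B = (\<Sum>k\<in>{1..<Suc d}. (v $ k)\<^sup>2)"
  define C where "C = (\<Sum>k\<in>{1..<Suc d}. u $ k * v $ k)"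
  have du: "dim_vec u = Suc d" and dv: "dim_vec v = Suc d" using assms by (auto simp: hyperboloid_def)
  have u0: "u $ 0 > 0" and v0: "v $ 0 > 0" using assms by (auto simp: hyperboloid_def)
  have "lorentz u u = 1" "lorentz v v = 1" using assms by (auto simp: hyperboloid_def)
  hence ua: "(u $ 0)\<^sup>2 = 1 + A" and vb: "(v $ 0)\<^sup>2 = 1 + B"
    unfolding lorentz_def A_def B_def du dv by (simp_all add: power2_eq_square)
  have luv: "lorentz u v = u $ 0 * v $ 0 - C" unfolding lorentz_def C_def du by simp
  have cs: "C\<^sup>2 \<le> A * B" unfolding A_def B_def C_def by (rule cs_sum)
  have A0: "A \<ge> 0" "B \<ge> 0" unfolding A_def B_def by (rule sum_nonneg, simp)+
  have ab1: "A + B - 2 * C \<ge> 0"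
  proof -
    have "A + B - 2 * C = (\<Sum>k\<in>{1..<Suc d}. (u $ k - v $ k)\<^sup>2)"
      unfolding A_def B_def C_def by (simp add: power2_eq_square algebra_simps sum.distrib sum_subtractf sum_distrib_left)
    then show ?thesis by (simp add: sum_nonneg)
  qed
  have ab2: "A + B + 2 * C \<ge> 0"
  proof -
    have "A + B + 2 * C = (\<Sum>k\<in>{1..<Suc d}. (u $ k + v $ k)\<^sup>2)"
      unfolding A_def B_def C_def by (simp add: power2_eq_square algebra_simps sum.distrib sum_distrib_left)
    then show ?thesis by (simp add: sum_nonneg)
  qed
  have "(u $ 0 * v $ 0)\<^sup>2 = (1 + A) * (1 + B)" by (simp add: power_mult_distrib ua vb)
  also have "\<dots> \<ge> (1 + \<bar>C\<bar>)\<^sup>2"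
  proof -
    have "\<bar>C\<bar>\<^sup>2 \<le> A * B" using cs by simp
    moreover have "2 * \<bar>C\<bar> \<le> A + B" using ab1 ab2 by (cases "C \<ge> 0") auto
    ultimately show ?thesis by (simp add: power2_eq_square algebra_simps)
  qed
  finally have "1 + \<bar>C\<bar> \<le> u $ 0 * v $ 0"
    using u0 v0 by (meson abs_ge_zero add_nonneg_nonneg mult_pos_pos less_imp_le power2_le_imp_le zero_le_one)
  then show ?thesis using luv by linarith
qed



locale lh =
  fixes d l m :: nat and \<kappa> :: real and X Q :: "real mat" and lam :: "nat \<Rightarrow> real"
  assumes d1: "d \<ge> 1" and kp: "\<kappa> > 0"
    and Xc: "X \<in> carrier_mat (l + m) (d + 1)"
    and hyp: "\<forall>i<l + m. row X i \<in> hyperboloid d"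
    and nhp: "\<not> rows_in_hyperplane d l X"
    and eig: "lhydra_eigdecomp \<kappa> (mat l l (\<lambda>(i, j). distH \<kappa> (row X i) (row X j))) Q lam"
begin

definition G where "G i j = lorentz (row X i) (row X j)"
abbreviation x where "x i a \<equiv> X $$ (i, a)"

lemma dimX[simp]: "dim_row X = l + m" "dim_col X = Suc d" using Xc by auto

lemma Gsum: "i < l + m \<Longrightarrow> j < l + m \<Longrightarrow> G i j = (\<Sum>a<Suc d. sg a * x i a * x j a)"
  unfolding G_def by (subst lorentz_sum[of _ d]) auto

lemma Gge1: "i < l + m \<Longrightarrow> j < l + m \<Longrightarrow> G i j \<ge> 1"
  unfolding G_def using hyp lorentz_ge1 by blast

lemma Gii: "i < l + m \<Longrightarrow> G i i = 1"
  unfolding G_def using hyp by (auto simp: hyperboloid_def)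

lemma cosh_dist: "i < l + m \<Longrightarrow> j < l + m \<Longrightarrow> cosh (sqrt \<kappa> * distH \<kappa> (row X i) (row X j)) = G i j"
  unfolding distH_def using kp Gge1[of i j] by (simp add: cosh_arcosh_real G_def)

definition Dg where "Dg = mat l l (\<lambda>(i, j). if i = j then lam i else 0)"

lemma Qc: "Q \<in> carrier_mat l l" and QtQ: "transpose_mat Q * Q = 1\<^sub>m l" and QQt: "Q * transpose_mat Q = 1\<^sub>m l"
  and Gdec: "mat l l (\<lambda>(i,j). G i j) = Q * Dg * transpose_mat Q"
  and sorted: "\<And>i j. i \<le> j \<Longrightarrow> j < l \<Longrightarrow> lam j \<le> lam i"
  and Qpos: "\<And>i. i < l \<Longrightarrow> Q $$ (i, 0) > 0"
proof -
  have cm: "coshmat \<kappa> (mat l l (\<lambda>(i, j). distH \<kappa> (row X i) (row X j))) = mat l l (\<lambda>(i,j). G i j)"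
    unfolding coshmat_def by (rule eq_matI) (auto simp: cosh_dist)
  from eig show "Q \<in> carrier_mat l l" "transpose_mat Q * Q = 1\<^sub>m l" "Q * transpose_mat Q = 1\<^sub>m l"
    "mat l l (\<lambda>(i,j). G i j) = Q * Dg * transpose_mat Q"
    "\<And>i j. i \<le> j \<Longrightarrow> j < l \<Longrightarrow> lam j \<le> lam i" "\<And>i. i < l \<Longrightarrow> Q $$ (i, 0) > 0"
    unfolding lhydra_eigdecomp_def Let_def cm Dg_def by auto
qed

lemma orth1: "i < l \<Longrightarrow> j < l \<Longrightarrow> (\<Sum>k<l. Q $$ (i,k) * Q $$ (j,k)) = (if i = j then 1 else 0)"
proof -
  assume ij: "i < l" "j < l"
  have "(Q * transpose_mat Q) $$ (i,j) = (if i = j then 1 else 0)" using QQt ij by simp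
  then show ?thesis using Qc ij by (simp add: scalar_prod_def lessThan_atLeast0)
qed

lemma orth2: "i < l \<Longrightarrow> j < l \<Longrightarrow> (\<Sum>k<l. Q $$ (k,i) * Q $$ (k,j)) = (if i = j then 1 else 0)"
proof -
  assume ij: "i < l" "j < l"
  have "(transpose_mat Q * Q) $$ (i,j) = (if i = j then 1 else 0)" using QtQ ij by simp
  then show ?thesis using Qc ij by (simp add: scalar_prod_def lessThan_atLeast0)
qed

lemma eigen: "i < l \<Longrightarrow> k < l \<Longrightarrow> (\<Sum>j<l. G i j * Q $$ (j,k)) = lam k * Q $$ (i,k)"
proof -
  assume ik: "i < l" "k < l"
  have Dc: "Dg \<in> carrier_mat l l" unfolding Dg_def by simp
  have "mat l l (\<lambda>(i,j). G i j) * Q = Q * Dg * (transpose_mat Q * Q)"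
    unfolding Gdec using Qc Dc by (simp add: assoc_mult_mat[of _ l l _ l _ l])
  also have "\<dots> = Q * Dg" unfolding QtQ using Qc Dc by simp
  finally have e: "(mat l l (\<lambda>(i,j). G i j) * Q) $$ (i,k) = (Q * Dg) $$ (i,k)" by simp
  have "(Q * Dg) $$ (i,k) = (\<Sum>j<l. Q $$ (i,j) * (if j = k then lam k else 0))"
    using Qc ik by (simp add: scalar_prod_def lessThan_atLeast0 Dg_def cong: if_cong)
  also have "\<dots> = lam k * Q $$ (i,k)" using ik by (simp add: if_distrib cong: if_cong)
  finally show ?thesis using e Qc ik by (simp add: scalar_prod_def lessThan_atLeast0)
qed

end

declare sum.lessThan_Suc[simp del]
context lh begin

lemma inj: assumes "\<forall>i<l. (\<Sum>a<Suc d. w a * x i a) = 0" "a < Suc d" shows "w a = 0"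
proof (rule ccontr)
  assume na: "w a \<noteq> 0"
  have "rows_in_hyperplane d l X"
    unfolding rows_in_hyperplane_def
  proof (intro exI conjI allI impI)
    show "dim_vec (vec (Suc d) w) = d + 1" by simp
    show "vec (Suc d) w \<noteq> 0\<^sub>v (d + 1)"
    proof
      assume "vec (Suc d) w = 0\<^sub>v (d + 1)"
      then have "vec (Suc d) w $ a = 0\<^sub>v (d+1) $ a" by simp
      then show False using na assms(2) by simp
    qed
    fix i assume "i < l"
    then show "vec (Suc d) w \<bullet> row X i = 0"
      using assms(1) by (simp add: scalar_prod_def lessThan_atLeast0)
  qed
  then show False using nhp by simp
qed

definition v where "v k a = (\<Sum>i<l. x i a * Q $$ (i,k))"

lemma eigv: "i < l \<Longrightarrow> k < l \<Longrightarrow> (\<Sum>b<Suc d. x i b * sg b * v k b) = lam k * Q $$ (i,k)"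
proof -
  assume ik: "i < l" "k < l"
  have "(\<Sum>j<l. G i j * Q$$(j,k)) = (\<Sum>j<l. \<Sum>b<Suc d. sg b * x i b * x j b * Q$$(j,k))"
    using ik by (simp add: Gsum sum_distrib_right)
  also have "\<dots> = (\<Sum>b<Suc d. \<Sum>j<l. sg b * x i b * x j b * Q$$(j,k))" by (rule sum.swap)
  also have "\<dots> = (\<Sum>b<Suc d. x i b * sg b * v k b)" by (simp add: v_def sum_distrib_left mult_ac)
  finally show ?thesis using eigen ik by simp
qed

lemma V0: "k < l \<Longrightarrow> lam k = 0 \<Longrightarrow> b < Suc d \<Longrightarrow> v k b = 0"
proof -
  assume a: "k < l" "lam k = 0" "b < Suc d"
  have "sg b * v k b = 0"
    by (rule inj[where w="\<lambda>b. sg b * v k b"]) (use a eigv in \<open>auto simp: mult_ac\<close>)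
  then show ?thesis by simp
qed

lemma Jorth: "j < l \<Longrightarrow> k < l \<Longrightarrow> (\<Sum>a<Suc d. sg a * v j a * v k a) = (if j = k then lam k else 0)"
proof -
  assume jk: "j < l" "k < l"
  have "(\<Sum>a<Suc d. sg a * v j a * v k a) = (\<Sum>a<Suc d. \<Sum>i<l. Q$$(i,j) * (x i a * sg a * v k a))"
    by (rule sum.cong) (simp_all add: v_def[of j] sum_distrib_right sum_distrib_left mult_ac)
  also have "\<dots> = (\<Sum>i<l. \<Sum>a<Suc d. Q$$(i,j) * (x i a * sg a * v k a))" by (rule sum.swap)
  also have "\<dots> = (\<Sum>i<l. Q$$(i,j) * (lam k * Q $$ (i,k)))"
    by (rule sum.cong) (simp_all add: eigv jk flip: sum_distrib_left)
  also have "\<dots> = lam k * (\<Sum>i<l. Q$$(i,j) * Q $$ (i,k))" by (simp add: sum_distrib_left mult_ac)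
  finally show ?thesis using orth2 jk by simp
qed

lemma pos_unique: assumes "j < l" "k < l" "lam j > 0" "lam k > 0" shows "j = k"
proof (rule ccontr)
  assume jk: "j \<noteq> k"
  define \<alpha> where "\<alpha> = v k 0"
  define \<beta> where "\<beta> = v j 0"
  define w where "w a = \<alpha> * v j a - \<beta> * v k a" for a
  have "(\<Sum>a<Suc d. sg a * (w a)\<^sup>2) = \<alpha>\<^sup>2 * (\<Sum>a<Suc d. sg a * v j a * v j a)
      - 2 * \<alpha> * \<beta> * (\<Sum>a<Suc d. sg a * v j a * v k a) + \<beta>\<^sup>2 * (\<Sum>a<Suc d. sg a * v k a * v k a)"
    by (simp add: w_def power2_eq_square algebra_simps sum.distrib sum_subtractf sum_distrib_left)
  also have "\<dots> = \<alpha>\<^sup>2 * lam j + \<beta>\<^sup>2 * lam k" using Jorth assms jk by simp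
  finally have e: "(\<Sum>a<Suc d. sg a * (w a)\<^sup>2) = \<alpha>\<^sup>2 * lam j + \<beta>\<^sup>2 * lam k" .
  have "(\<Sum>a<Suc d. sg a * (w a)\<^sup>2) \<le> 0"
    by (rule sum_nonpos) (auto simp: sg_def w_def \<alpha>_def \<beta>_def)
  then have "\<alpha>\<^sup>2 * lam j + \<beta>\<^sup>2 * lam k \<le> 0" using e by simp
  moreover have "\<alpha>\<^sup>2 * lam j \<ge> 0" "\<beta>\<^sup>2 * lam k \<ge> 0" using assms by auto
  ultimately have "\<beta>\<^sup>2 * lam k = 0" by linarith
  then have b0: "v j 0 = 0" using assms \<beta>_def by simp
  have "(\<Sum>a<Suc d. sg a * v j a * v j a) \<le> 0"
    by (rule sum_nonpos) (auto simp: sg_def b0)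
  then show False using Jorth[of j j] assms by simp
qed

lemma lpos: "l > 0"
proof (rule ccontr)
  assume "\<not> l > 0"
  then have "(\<lambda>_. 1::real) 0 = 0" by (intro inj) auto
  then show False by simp
qed

lemma lam0: "lam 0 > 0"
proof -
  have "(\<Sum>j<l. G 0 j * Q $$ (j,0)) > 0"
    using lpos by (intro sum_pos) (auto intro!: mult_pos_pos Qpos order.strict_trans2[OF _ Gge1])
  then have "lam 0 * Q $$ (0,0) > 0" using eigen lpos by simp
  then show ?thesis using Qpos[OF lpos] by (simp add: zero_less_mult_iff)
qed

definition K where "K = {k. k < l \<and> lam k \<noteq> 0}"
lemma finK[simp]: "finite K" unfolding K_def by simp

definition P where "P a b = (\<Sum>k\<in>K. (1 / lam k) * v k a * sg b * v k b)"

lemma c1: assumes "i < l" "a < Suc d"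
  shows "x i a = (\<Sum>k\<in>K. (1/lam k) * v k a * (\<Sum>b<Suc d. x i b * sg b * v k b))"
proof -
  have "x i a = (\<Sum>j<l. x j a * (if i = j then 1 else 0))" using assms by (simp add: if_distrib cong: if_cong)
  also have "\<dots> = (\<Sum>j<l. \<Sum>k<l. x j a * (Q $$ (i,k) * Q $$ (j,k)))"
  proof (rule sum.cong)
    fix j assume "j \<in> {..<l}"
    then show "x j a * (if i = j then 1 else 0) = (\<Sum>k<l. x j a * (Q $$ (i,k) * Q $$ (j,k)))"
      using orth1[of i j] assms by (simp add: sum_distrib_left[symmetric])
  qed simp
  also have "\<dots> = (\<Sum>k<l. \<Sum>j<l. x j a * (Q $$ (i,k) * Q $$ (j,k)))" by (rule sum.swap)
  also have "\<dots> = (\<Sum>k<l. Q $$ (i,k) * v k a)" by (simp add: v_def sum_distrib_left mult_ac)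
  also have "\<dots> = (\<Sum>k\<in>K. Q $$ (i,k) * v k a)"
    by (rule sum.mono_neutral_right) (auto simp: K_def V0 assms)
  also have "\<dots> = (\<Sum>k\<in>K. (1/lam k) * v k a * (\<Sum>b<Suc d. x i b * sg b * v k b))"
    by (rule sum.cong) (auto simp: K_def eigv assms)
  finally show ?thesis .
qed

lemma Pid: assumes "a < Suc d" "b < Suc d" shows "P a b = (if a = b then 1 else 0)"
proof -
  have "(\<lambda>b. (if a = b then 1 else 0) - P a b) b = 0"
  proof (rule inj[OF _ assms(2)], intro allI impI)
    fix i assume i: "i < l"
    have "(\<Sum>b<Suc d. P a b * x i b) = (\<Sum>b<Suc d. \<Sum>k\<in>K. (1 / lam k) * v k a * (x i b * sg b * v k b))"
      by (simp add: P_def sum_distrib_right sum_distrib_left mult_ac)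
    also have "\<dots> = (\<Sum>k\<in>K. \<Sum>b<Suc d. (1 / lam k) * v k a * (x i b * sg b * v k b))" by (rule sum.swap)
    also have "\<dots> = x i a" using c1[OF i assms(1)] by (simp add: sum_distrib_left)
    finally have "(\<Sum>b<Suc d. P a b * x i b) = x i a" .
    moreover have "(\<Sum>b<Suc d. (if a = b then 1 else 0) * x i b) = (\<Sum>b<Suc d. if a = b then x i b else 0)"
      by (rule sum.cong) auto
    moreover have "(\<Sum>b<Suc d. if a = b then x i b else 0) = x i a" using assms by simp
    ultimately show "(\<Sum>b<Suc d. ((if a = b then 1 else 0) - P a b) * x i b) = 0"
      by (simp add: left_diff_distrib sum_subtractf)
  qed
  then show ?thesis by simp
qed

lemma cardK: "card K = Suc d"
proof -
  have "real (Suc d) = (\<Sum>a<Suc d. P a a)" by (simp add: Pid)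
  also have "\<dots> = (\<Sum>k\<in>K. \<Sum>a<Suc d. (1 / lam k) * (sg a * v k a * v k a))"
    unfolding P_def by (subst sum.swap) (simp add: mult_ac)
  also have "\<dots> = (\<Sum>k\<in>K. (1 / lam k) * lam k)"
  proof (rule sum.cong)
    fix k assume k: "k \<in> K"
    show "(\<Sum>a<Suc d. (1 / lam k) * (sg a * v k a * v k a)) = (1 / lam k) * lam k"
      by (subst sum_distrib_left[symmetric]) (use k Jorth[of k k] in \<open>simp add: K_def\<close>)
  qed simp
  also have "\<dots> = card K" by (simp add: K_def)
  finally show ?thesis by linarith
qed

lemma lge: "Suc d \<le> l"
proof -
  have "card K \<le> card {..<l}" by (rule card_mono) (auto simp: K_def)
  then show ?thesis using cardK by simp
qed

lemma neg: assumes "l - d \<le> k" "k < l" shows "lam k < 0"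
proof (rule ccontr)
  assume "\<not> lam k < 0"
  then have lk: "lam k \<ge> 0" by simp
  have "K \<subseteq> {0} \<union> {k<..<l}"
  proof
    fix j assume j: "j \<in> K"
    show "j \<in> {0} \<union> {k<..<l}"
    proof (cases "j \<le> k")
      case True
      then have "lam j \<ge> lam k" using sorted assms by simp
      then have "lam j > 0" using j lk by (auto simp: K_def)
      then have "j = 0" using pos_unique[of j 0] lam0 j lpos by (auto simp: K_def)
      then show ?thesis by simp
    qed (use j in \<open>auto simp: K_def\<close>)
  qed
  then have "card K \<le> card ({0} \<union> {k<..<l})" by (intro card_mono) auto
  also have "\<dots> \<le> 1 + card {k<..<l}" using card_Un_le[of "{0::nat}" "{k<..<l}"] by simp
  also have "\<dots> \<le> d" using assms lge by simp
  finally show False using cardK by simp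
qed

end

context lh begin

abbreviation idx where "idx c \<equiv> lh_idx l d c"
abbreviation s where "s c \<equiv> lh_scale l d lam c"
definition Mm where "Mm i c = (if c = 0 then 1 else -1) * Q $$ (i, lh_idx l d c) / lh_scale l d lam c"

lemma idx_lt: "c < Suc d \<Longrightarrow> idx c < l"
  using lge lpos by (auto simp: lh_idx_def)

lemma idx_inj: "c < Suc d \<Longrightarrow> c' < Suc d \<Longrightarrow> idx c = idx c' \<Longrightarrow> c = c'"
  using lge by (auto simp: lh_idx_def split: if_splits)

lemma lam_idx_neg: "c < Suc d \<Longrightarrow> c \<noteq> 0 \<Longrightarrow> lam (idx c) < 0"
  using lge by (intro neg) (auto simp: lh_idx_def)

lemma s_pos: "c < Suc d \<Longrightarrow> s c > 0"
  using lam0 lam_idx_neg[of c] by (auto simp: lh_scale_def)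

lemma key1: "c < Suc d \<Longrightarrow> sg c * lam (idx c) / s c = s c"
proof -
  assume c: "c < Suc d"
  show ?thesis
  proof (cases "c = 0")
    case True
    then show ?thesis using lam0 by (simp add: lh_scale_def lh_idx_def sg_def real_div_sqrt)
  next
    case False
    then have "lam (idx c) < 0" using lam_idx_neg c by simp
    then have "- lam (idx c) / sqrt (- lam (idx c)) = sqrt (- lam (idx c))"
      using real_div_sqrt[of "- lam (idx c)"] by linarith
    moreover have e1: "sg c * lam (idx c) = - lam (idx c)" using False by (simp add: sg_def)
    moreover have e2: "s c = sqrt (- lam (idx c))" using False by (simp add: lh_scale_def)
    ultimately show ?thesis by (simp only: e1 e2)
  qed
qed

lemma key2: "c < Suc d \<Longrightarrow> lam (idx c) / (s c * s c) = sg c"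
proof -
  assume c: "c < Suc d"
  show ?thesis
  proof (cases "c = 0")
    case True
    then show ?thesis using lam0 by (simp add: lh_scale_def lh_idx_def sg_def)
  next
    case False
    then have "lam (idx c) < 0" using lam_idx_neg c by simp
    then show ?thesis using False by (simp add: lh_scale_def sg_def)
  qed
qed

lemma Mm_alt: "Mm i c = (sg c / s c) * Q $$ (i, idx c)"
  unfolding Mm_def sg_def by simp

lemma GM_L: assumes "i < l" "c < Suc d" shows "(\<Sum>j<l. G i j * Mm j c) = s c * Q $$ (i, idx c)"
proof -
  have "(\<Sum>j<l. G i j * Mm j c) = (sg c / s c) * (\<Sum>j<l. G i j * Q $$ (j, idx c))"
    by (simp add: Mm_alt sum_distrib_left mult_ac)
  also have "\<dots> = (sg c / s c) * (lam (idx c) * Q $$ (i, idx c))"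
    using eigen assms idx_lt by simp
  also have "\<dots> = (sg c * lam (idx c) / s c) * Q $$ (i, idx c)" by simp
  finally show ?thesis using key1 assms by simp
qed

definition H where "H c a = (\<Sum>j<l. x j a * Mm j c)"

lemma XH: assumes "i < l + m" shows "(\<Sum>a<Suc d. x i a * sg a * H c a) = (\<Sum>j<l. G i j * Mm j c)"
proof -
  have "(\<Sum>a<Suc d. x i a * sg a * H c a) = (\<Sum>a<Suc d. \<Sum>j<l. sg a * x i a * x j a * Mm j c)"
    by (simp add: H_def sum_distrib_left mult_ac)
  also have "\<dots> = (\<Sum>j<l. \<Sum>a<Suc d. sg a * x i a * x j a * Mm j c)" by (rule sum.swap)
  also have "\<dots> = (\<Sum>j<l. G i j * Mm j c)"
    using assms by (simp add: Gsum sum_distrib_right)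
  finally show ?thesis .
qed

definition T where "T = mat (Suc d) (Suc d) (\<lambda>(a,c). sg a * H c a)"

lemma Tc: "T \<in> carrier_mat (Suc d) (Suc d)" unfolding T_def by simp

lemma XT: assumes "i < l + m" "c < Suc d" shows "(X * T) $$ (i,c) = (\<Sum>j<l. G i j * Mm j c)"
proof -
  have "(X * T) $$ (i,c) = (\<Sum>a<Suc d. x i a * (sg a * H c a))"
    using assms by (simp add: T_def scalar_prod_def lessThan_atLeast0)
  then show ?thesis using XH[OF assms(1)] by (simp add: mult_ac)
qed

lemma TJT: assumes "b < Suc d" "c < Suc d"
  shows "(\<Sum>a<Suc d. T $$ (a,b) * sg a * T $$ (a,c)) = (if b = c then sg b else 0)"
proof -
  have "(\<Sum>a<Suc d. T $$ (a,b) * sg a * T $$ (a,c)) = (\<Sum>a<Suc d. \<Sum>i<l. Mm i b * (x i a * sg a * H c a))"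
  proof (rule sum.cong)
    fix a assume a: "a \<in> {..<Suc d}"
    have "T $$ (a,b) * sg a * T $$ (a,c) = (sg a * sg a) * sg a * H b a * H c a"
      using a assms by (simp add: T_def)
    also have "\<dots> = H b a * (sg a * H c a)" by simp
    also have "\<dots> = (\<Sum>i<l. Mm i b * (x i a * sg a * H c a))"
      by (simp add: H_def[of b] sum_distrib_right sum_distrib_left mult_ac)
    finally show "T $$ (a,b) * sg a * T $$ (a,c) = (\<Sum>i<l. Mm i b * (x i a * sg a * H c a))" .
  qed simp
  also have "\<dots> = (\<Sum>i<l. \<Sum>a<Suc d. Mm i b * (x i a * sg a * H c a))" by (rule sum.swap)
  also have "\<dots> = (\<Sum>i<l. Mm i b * (s c * Q $$ (i, idx c)))"
  proof (rule sum.cong)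
    fix i assume i: "i \<in> {..<l}"
    show "(\<Sum>a<Suc d. Mm i b * (x i a * sg a * H c a)) = Mm i b * (s c * Q $$ (i, idx c))"
      using XH[of i c] GM_L[of i c] i assms by (simp flip: sum_distrib_left)
  qed simp
  also have "\<dots> = (sg b / s b * s c) * (\<Sum>i<l. Q $$ (i, idx b) * Q $$ (i, idx c))"
    by (simp add: Mm_alt sum_distrib_left mult_ac)
  also have "\<dots> = (if b = c then sg b else 0)"
  proof (cases "b = c")
    case True
    have o: "(\<Sum>i<l. Q $$ (i, idx b) * Q $$ (i, idx c)) = 1"
      using orth2[OF idx_lt[OF assms(2)] idx_lt[OF assms(2)]] True by simp
    have sne: "s c \<noteq> 0" using s_pos[OF assms(2)] by linarith
    show ?thesis unfolding o using True sne by simp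
  next
    case False
    then have "idx b \<noteq> idx c" using idx_inj[OF assms] by blast
    then show ?thesis using orth2[OF idx_lt[OF assms(1)] idx_lt[OF assms(2)]] False by simp
  qed
  finally show ?thesis .
qed

end

context lh begin

lemma Jc: "lorentzJ d \<in> carrier_mat (Suc d) (Suc d)" unfolding lorentzJ_def by simp
lemma dimJ[simp]: "dim_row (lorentzJ d) = Suc d" "dim_col (lorentzJ d) = Suc d" unfolding lorentzJ_def by simp_all
lemma Jidx: "i < Suc d \<Longrightarrow> j < Suc d \<Longrightarrow> lorentzJ d $$ (i,j) = (if i = j then sg i else 0)"
  unfolding lorentzJ_def sg_def by simp

lemma multJ: assumes "A \<in> carrier_mat r (Suc d)" "i < r" "j < Suc d"
  shows "(A * lorentzJ d) $$ (i,j) = A $$ (i,j) * sg j"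
proof -
  have "(A * lorentzJ d) $$ (i,j) = (\<Sum>k<Suc d. A $$ (i,k) * lorentzJ d $$ (k,j))"
    using assms Jc by (simp add: scalar_prod_def lessThan_atLeast0)
  also have "\<dots> = (\<Sum>k<Suc d. if k = j then A $$ (i,j) * sg j else 0)"
    by (rule sum.cong) (auto simp: Jidx assms)
  finally show ?thesis using assms by simp
qed

lemma JJ: "lorentzJ d * lorentzJ d = 1\<^sub>m (Suc d)"
proof (rule eq_matI)
  fix i j assume ij: "i < dim_row (1\<^sub>m (Suc d) :: real mat)" "j < dim_col (1\<^sub>m (Suc d) :: real mat)"
  then have "(lorentzJ d * lorentzJ d) $$ (i,j) = lorentzJ d $$ (i,j) * sg j" by (intro multJ[OF Jc]) auto
  then show "(lorentzJ d * lorentzJ d) $$ (i,j) = 1\<^sub>m (Suc d) $$ (i,j)" using ij by (simp add: Jidx)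
qed auto

lemma TtJT: "transpose_mat T * lorentzJ d * T = lorentzJ d"
proof (rule eq_matI)
  fix b c assume bc: "b < dim_row (lorentzJ d)" "c < dim_col (lorentzJ d)"
  then have b: "b < Suc d" and c: "c < Suc d" using Jc by auto
  have TtJ: "transpose_mat T * lorentzJ d \<in> carrier_mat (Suc d) (Suc d)" using Tc Jc by simp
  have "(transpose_mat T * lorentzJ d * T) $$ (b,c) = (\<Sum>a<Suc d. (transpose_mat T * lorentzJ d) $$ (b,a) * T $$ (a,c))"
    using TtJ Tc b c by (simp add: scalar_prod_def lessThan_atLeast0)
  also have "\<dots> = (\<Sum>a<Suc d. T $$ (a,b) * sg a * T $$ (a,c))"
  proof (rule sum.cong)
    fix a assume a: "a \<in> {..<Suc d}"
    have "(transpose_mat T * lorentzJ d) $$ (b,a) = transpose_mat T $$ (b,a) * sg a"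
      by (rule multJ) (use Tc a b in auto)
    then show "(transpose_mat T * lorentzJ d) $$ (b,a) * T $$ (a,c) = T $$ (a,b) * sg a * T $$ (a,c)"
      using Tc a b by simp
  qed simp
  also have "\<dots> = lorentzJ d $$ (b,c)" using TJT b c Jidx by simp
  finally show "(transpose_mat T * lorentzJ d * T) $$ (b,c) = lorentzJ d $$ (b,c)" .
qed (use Tc Jc in auto)

definition Ti where "Ti = lorentzJ d * transpose_mat T * lorentzJ d"

lemma Tic: "Ti \<in> carrier_mat (Suc d) (Suc d)" unfolding Ti_def using Tc Jc by simp

lemma TiT: "Ti * T = 1\<^sub>m (Suc d)"
proof -
  have "Ti * T = lorentzJ d * (transpose_mat T * lorentzJ d * T)"
    unfolding Ti_def using Tc Jc by (simp add: assoc_mult_mat[of _ "Suc d" "Suc d" _ "Suc d" _ "Suc d"])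
  also have "\<dots> = 1\<^sub>m (Suc d)" unfolding TtJT JJ ..
  finally show ?thesis .
qed

lemma TTi: "T * Ti = 1\<^sub>m (Suc d)"
  using mat_mult_left_right_inverse[OF Tic Tc TiT] .

lemma TJTt: "T * lorentzJ d * transpose_mat T = lorentzJ d"
proof -
  have "T * lorentzJ d * transpose_mat T = T * lorentzJ d * transpose_mat T * (lorentzJ d * lorentzJ d)"
    unfolding JJ using Tc Jc by simp
  also have "\<dots> = (T * Ti) * lorentzJ d"
    unfolding Ti_def using Tc Jc by (simp add: assoc_mult_mat[of _ "Suc d" "Suc d" _ "Suc d" _ "Suc d"])
  also have "\<dots> = lorentzJ d" unfolding TTi using Jc by simp
  finally show ?thesis .
qed

lemma TJTs: assumes "b < Suc d" "c < Suc d"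
  shows "(\<Sum>a<Suc d. T $$ (b,a) * sg a * T $$ (c,a)) = (if b = c then sg b else 0)"
proof -
  have TJ: "T * lorentzJ d \<in> carrier_mat (Suc d) (Suc d)" using Tc Jc by simp
  have "(T * lorentzJ d * transpose_mat T) $$ (b,c) = (\<Sum>a<Suc d. (T * lorentzJ d) $$ (b,a) * T $$ (c,a))"
    using TJ Tc assms by (simp add: scalar_prod_def lessThan_atLeast0)
  also have "\<dots> = (\<Sum>a<Suc d. T $$ (b,a) * sg a * T $$ (c,a))"
  proof (rule sum.cong)
    fix a assume a: "a \<in> {..<Suc d}"
    have "(T * lorentzJ d) $$ (b,a) = T $$ (b,a) * sg a"
      by (rule multJ) (use Tc a assms in auto)
    then show "(T * lorentzJ d) $$ (b,a) * T $$ (c,a) = T $$ (b,a) * sg a * T $$ (c,a)"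
      by simp
  qed simp
  finally show ?thesis using TJTt Jidx assms by simp
qed

lemma invT: "invertible_mat T"
  unfolding invertible_mat_def inverts_mat_def using Tc Tic TTi TiT by (auto intro!: exI[of _ Ti])

lemma T00: "T $$ (0,0) > 0"
proof -
  have "T $$ (0,0) = (\<Sum>j<l. x j 0 * Mm j 0)" unfolding T_def H_def by (simp add: sg_def)
  also have "\<dots> > 0"
  proof (rule sum_pos)
    fix j assume j: "j \<in> {..<l}"
    have "row X j $ 0 > 0" using hyp j by (auto simp: hyperboloid_def)
    then have "x j 0 > 0" using j by simp
    moreover have "Mm j 0 > 0" unfolding Mm_def using Qpos j lam0 by (simp add: lh_scale_def lh_idx_def)
    ultimately show "x j 0 * Mm j 0 > 0" by simp
  qed (use lpos in auto)
  finally show ?thesis .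
qed

lemma posT: "positive_lorentz d T"
  unfolding positive_lorentz_def using Tc invT T00 TtJT TJTt by simp

end

context lh begin

lemma XTc: "X * T \<in> carrier_mat (l + m) (Suc d)" using Xc Tc by simp

lemma XTidx: "i < l + m \<Longrightarrow> a < Suc d \<Longrightarrow> (X * T) $$ (i,a) = (\<Sum>b<Suc d. x i b * T $$ (b,a))"
  using Tc by (simp add: scalar_prod_def lessThan_atLeast0)

lemma inner: assumes "j < l + m" "b < Suc d"
  shows "(\<Sum>a<Suc d. T $$ (b,a) * sg a * (X * T) $$ (j,a)) = x j b * sg b"
proof -
  have "(\<Sum>a<Suc d. T $$ (b,a) * sg a * (X * T) $$ (j,a)) = (\<Sum>a<Suc d. \<Sum>c<Suc d. x j c * (T $$ (b,a) * sg a * T $$ (c,a)))"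
    by (rule sum.cong) (simp_all add: XTidx assms sum_distrib_left mult_ac)
  also have "\<dots> = (\<Sum>c<Suc d. \<Sum>a<Suc d. x j c * (T $$ (b,a) * sg a * T $$ (c,a)))" by (rule sum.swap)
  also have "\<dots> = (\<Sum>c<Suc d. x j c * (if b = c then sg b else 0))"
    by (rule sum.cong) (simp_all add: TJTs assms flip: sum_distrib_left)
  also have "\<dots> = (\<Sum>c<Suc d. if b = c then x j b * sg b else 0)"
    by (rule sum.cong) auto
  also have "\<dots> = x j b * sg b" using assms by simp
  finally show ?thesis .
qed

lemma preserve: assumes "i < l + m" "j < l + m"
  shows "lorentz (row (X * T) i) (row (X * T) j) = G i j"
proof -
  have "lorentz (row (X * T) i) (row (X * T) j) = (\<Sum>a<Suc d. sg a * (X * T) $$ (i,a) * (X * T) $$ (j,a))"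
    using XTc assms by (subst lorentz_sum[of _ d]) auto
  also have "\<dots> = (\<Sum>a<Suc d. \<Sum>b<Suc d. x i b * (T $$ (b,a) * sg a * (X * T) $$ (j,a)))"
    by (rule sum.cong) (simp_all add: XTidx[OF assms(1)] sum_distrib_left sum_distrib_right mult_ac)
  also have "\<dots> = (\<Sum>b<Suc d. \<Sum>a<Suc d. x i b * (T $$ (b,a) * sg a * (X * T) $$ (j,a)))" by (rule sum.swap)
  also have "\<dots> = (\<Sum>b<Suc d. x i b * (x j b * sg b))"
    by (rule sum.cong) (simp_all add: inner assms flip: sum_distrib_left)
  also have "\<dots> = G i j" using Gsum assms by (simp add: mult_ac)
  finally show ?thesis .
qed

lemma first_pos: assumes "i < l + m" shows "(X * T) $$ (i,0) > 0"
proof -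
  have "(X * T) $$ (i,0) = (\<Sum>j<l. G i j * Mm j 0)" using XT assms by simp
  also have "\<dots> > 0"
  proof (rule sum_pos)
    fix j assume j: "j \<in> {..<l}"
    have "G i j \<ge> 1" using Gge1 assms j by simp
    moreover have "Mm j 0 > 0" unfolding Mm_def using Qpos j lam0 by (simp add: lh_scale_def lh_idx_def)
    ultimately show "G i j * Mm j 0 > 0" by simp
  qed (use lpos in auto)
  finally show ?thesis .
qed

lemma app:
  "mat l (d + 1) (\<lambda>(i, c). lh_scale l d lam c * Q $$ (i, lh_idx l d c)) @\<^sub>r
   (coshmat \<kappa> (mat m l (\<lambda>(i, j). distH \<kappa> (row X (l + i)) (row X j))) *
    mat l (d + 1) (\<lambda>(i, c). (if c = 0 then 1 else -1) * Q $$ (i, lh_idx l d c) / lh_scale l d lam c))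
   = X * T"
  (is "?XL @\<^sub>r (?AN * ?M) = _")
proof -
  have AN: "?AN = mat m l (\<lambda>(i,j). G (l + i) j)"
    unfolding coshmat_def by (rule eq_matI) (auto simp: cosh_dist)
  have M: "?M = mat l (Suc d) (\<lambda>(i,c). Mm i c)" by (rule eq_matI) (auto simp: Mm_def)
  show ?thesis
  proof (rule eq_matI)
    show "dim_row (?XL @\<^sub>r (?AN * ?M)) = dim_row (X * T)" unfolding append_rows_def AN M by simp
    show "dim_col (?XL @\<^sub>r (?AN * ?M)) = dim_col (X * T)" unfolding append_rows_def AN M using Tc by simp
    fix i c assume ic: "i < dim_row (X * T)" "c < dim_col (X * T)"
    then have i: "i < l + m" and c: "c < Suc d" using Tc by auto
    have e: "(?XL @\<^sub>r (?AN * ?M)) $$ (i,c) = (if i < l then ?XL $$ (i,c) else (?AN * ?M) $$ (i - l, c))"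
      unfolding append_rows_def AN M using i c by simp
    show "(?XL @\<^sub>r (?AN * ?M)) $$ (i,c) = (X * T) $$ (i,c)"
    proof (cases "i < l")
      case True
      then show ?thesis unfolding e using GM_L[OF True c] XT[OF i c] c by simp
    next
      case False
      have "(?AN * ?M) $$ (i - l, c) = (\<Sum>j<l. G (l + (i - l)) j * Mm j c)"
        unfolding AN M using i c False by (simp add: scalar_prod_def lessThan_atLeast0)
      also have "\<dots> = (X * T) $$ (i,c)" using XT[OF i c] False by simp
      finally show ?thesis unfolding e using False by simp
    qed
  qed
qed

lemma lh_some:
  "lhydra (mat l l (\<lambda>(i, j). distH \<kappa> (row X i) (row X j)))
          (mat m l (\<lambda>(i, j). distH \<kappa> (row X (l + i)) (row X j))) d \<kappa> Q lam = Some (X * T)"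
proof -
  have cond: "\<not> (l < d + 1 \<or> \<not> (\<forall>k. l - d \<le> k \<and> k < l \<longrightarrow> lam k < 0))"
    using lge neg by auto
  show ?thesis unfolding lhydra_def Let_def using cond app by simp
qed

end

theorem theorem1:
  fixes d l m :: nat and \<kappa> :: real and X Q :: "real mat" and lam :: "nat \<Rightarrow> real"
  assumes "d \<ge> 1" and "\<kappa> > 0"
    and "X \<in> carrier_mat (l + m) (d + 1)"
    and "\<forall>i<l + m. row X i \<in> hyperboloid d"
    and "\<not> rows_in_hyperplane d l X"
    and "lhydra_eigdecomp \<kappa> (mat l l (\<lambda>(i, j). distH \<kappa> (row X i) (row X j))) Q lam"
  shows "\<exists>Xh. lhydra (mat l l (\<lambda>(i, j). distH \<kappa> (row X i) (row X j)))
                     (mat m l (\<lambda>(i, j). distH \<kappa> (row X (l + i)) (row X j))) d \<kappa> Q lam = Some Xh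
           \<and> Xh \<in> carrier_mat (l + m) (d + 1)
           \<and> (\<forall>i<l + m. row Xh i \<in> hyperboloid d)
           \<and> (\<forall>i<l + m. \<forall>j<l + m. distH \<kappa> (row Xh i) (row Xh j) = distH \<kappa> (row X i) (row X j))
           \<and> (\<exists>T. positive_lorentz d T \<and> Xh = X * T)"
proof -
  interpret lh d l m \<kappa> X Q lam using assms by unfold_locales
  show ?thesis
  proof (intro exI conjI allI impI)
    show "lhydra (mat l l (\<lambda>(i, j). distH \<kappa> (row X i) (row X j)))
                     (mat m l (\<lambda>(i, j). distH \<kappa> (row X (l + i)) (row X j))) d \<kappa> Q lam = Some (X * T)"
      by (rule lh_some)
    show "X * T \<in> carrier_mat (l + m) (d + 1)" using XTc by simp
    show "positive_lorentz d T" by (rule posT)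
    show "X * T = X * T" ..
    fix i assume i: "i < l + m"
    show "row (X * T) i \<in> hyperboloid d"
      unfolding hyperboloid_def using preserve[OF i i] Gii[OF i] first_pos[OF i] XTc i Tc by simp
    fix j assume j: "j < l + m"
    show "distH \<kappa> (row (X * T) i) (row (X * T) j) = distH \<kappa> (row X i) (row X j)"
      unfolding distH_def using preserve[OF i j] by (simp add: G_def)
  qed
qed


end
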